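(* Let $L$ be an infinite set and consider the edged cube $\bar Q_L$. Let $f$ be a legal configuration accessible from $f_{\mathrm{solved}}$. Then for each pair $\gamma,\gamma'$ of colors and each cluster $C$ consisting of edge cells, other than the corner cluster, there is at most one pair of coupled edge cells $c,c'$ with $c\in C$, $f(c)=\gamma$ and $f(c')=\gamma'$. Similarly, for each triple $\gamma,\gamma',\gamma''$ of colors, there is at most one triple of mutually coupled corner cells whose colors under $f$ are $\gamma,\gamma',\gamma''$.
   Context: Let $L$ be an infinite set, $-L=\{-r:r\in L\}$ a disjoint copy of $L$, and $0$ a new element; $L^\dagger=-L\cup\{0\}\cup L$ with $-(-r)=r$, $-0=0$. Adjoin $\pm\infty$ with $-(+\infty)=-\infty$ and set $\bar L^\dagger=L^\dagger\cup\{\pm\infty\}$. Points of $U=(\bar L^\dagger)^3$ have coordinates $x,y,z$. The edged cube $\bar Q_L$ is the set of cells $(p,i)$ with $p\in U$, $i\in\{x,y,z\}$, $p_i\in\{\pm\infty\}$ ($i$ marks the face of the cell). Cells whose point has exactly two (resp. three) coordinates in $\{\pm\infty\}$ are edge (resp. corner) cells; distinct cells with the same underlying point are coupled (two coupled cells at each edge point, three mutually coupled cells at each corner point). For $i\in\{x,y,z\}$, $\alpha\in\bar L^\dagger$, the quarter-turn twist $T_{i,\alpha}$ is the permutation of cells fixing every cell whose point $p$ has $p_i\ne\alpha$ and acting on the others by the rotation $T_{x,\alpha}(\alpha,y,z)=(\alpha,-z,y)$, $T_{y,\alpha}(x,\alpha,z)=(z,\alpha,-x)$, $T_{z,\alpha}(x,y,\alpha)=(-y,x,\alpha)$,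 the marked coordinate being carried along by the rotation. Basic twists are $T,T^2,T^3$ for quarter-turn twists $T$. A basic sequence is a sequence $\langle\sigma_\eta:\eta<\theta\rangle$ of basic twists of ordinal length $\theta$. A configuration is a map $f$ from cells to the six colors red, white, green, orange, yellow, blue together with a special value NaC; it is legal if it never takes value NaC. The solved configuration $f_{\mathrm{solved}}$ colors cell $(p,i)$ red, blue, white, orange, green, yellow according as $p_i=+\infty$ with $i=x,y,z$, or $p_i=-\infty$ with $i=x,y,z$. A twist $\sigma$ acts by $(\sigma f)(c)=f(\sigma^{-1}c)$. Applying $\langle\sigma_\eta:\eta<\theta\rangle$ to $f_0$ produces $f_{\eta+1}=\sigma_\eta f_\eta$, and for limit $\lambda\le\theta$, $f_\lambda(c)$ is the eventually constant value of $f_\eta(c)$ ($\eta<\lambda$) if it exists and NaC otherwise; $f_\theta$ is the terminal configuration. $f$ is accessible from $f_0$ if it is the terminal configuration of some basic sequence applied to $f_0$. The cluster of a cell is its orbit under the group generated by all quarter-turn twists; the corner cluster is the set of all corner cells. *)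

theory Defs
  imports Main
begin

text \<open>Elements of the extended set: Neg r = -r, Zero = 0, Pos r = r, PInf = +infinity, NInf = -infinity.\<close>
datatype 'l coord = Neg 'l | Zero | Pos 'l | PInf | NInf

fun cneg :: "'l coord \<Rightarrow> 'l coord" where
  "cneg (Neg r) = Pos r"
| "cneg (Pos r) = Neg r"
| "cneg Zero = Zero"
| "cneg PInf = NInf"
| "cneg NInf = PInf"

definition is_inf :: "'l coord \<Rightarrow> bool" where
  "is_inf a \<longleftrightarrow> a = PInf \<or> a = NInf"

datatype axis = AX | AY | AZ

type_synonym 'l point = "'l coord \<times> 'l coord \<times> 'l coord"
type_synonym 'l cell = "'l point \<times> axis"

fun coord_of :: "axis \<Rightarrow> 'l point \<Rightarrow> 'l coord" where
  "coord_of AX (x, y, z) = x"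
| "coord_of AY (x, y, z) = y"
| "coord_of AZ (x, y, z) = z"

definition is_cell :: "'l cell \<Rightarrow> bool" where
  "is_cell c \<longleftrightarrow> is_inf (coord_of (snd c) (fst c))"

definition num_inf :: "'l point \<Rightarrow> nat" where
  "num_inf p = card {i. is_inf (coord_of i p)}"

definition edge_cell :: "'l cell \<Rightarrow> bool" where
  "edge_cell c \<longleftrightarrow> is_cell c \<and> num_inf (fst c) = 2"

definition corner_cell :: "'l cell \<Rightarrow> bool" where
  "corner_cell c \<longleftrightarrow> is_cell c \<and> num_inf (fst c) = 3"

definition coupled :: "'l cell \<Rightarrow> 'l cell \<Rightarrow> bool" where
  "coupled c c' \<longleftrightarrow> is_cell c \<and> is_cell c' \<and> c \<noteq> c' \<and> fst c = fst c'"

definition corner_cluster :: "'l cell set" where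
  "corner_cluster = {c. corner_cell c}"

fun swap_yz :: "axis \<Rightarrow> axis" where
  "swap_yz AX = AX" | "swap_yz AY = AZ" | "swap_yz AZ = AY"
fun swap_xz :: "axis \<Rightarrow> axis" where
  "swap_xz AX = AZ" | "swap_xz AY = AY" | "swap_xz AZ = AX"
fun swap_xy :: "axis \<Rightarrow> axis" where
  "swap_xy AX = AY" | "swap_xy AY = AX" | "swap_xy AZ = AZ"

text \<open>Quarter-turn twist T_{i,alpha}; the marked coordinate is carried along.\<close>
fun qturn :: "axis \<Rightarrow> 'l coord \<Rightarrow> 'l cell \<Rightarrow> 'l cell" where
  "qturn AX a ((x, y, z), i) =
     (if x \<noteq> a then ((x, y, z), i) else ((a, cneg z, y), swap_yz i))"
| "qturn AY a ((x, y, z), i) =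
     (if y \<noteq> a then ((x, y, z), i) else ((z, a, cneg x), swap_xz i))"
| "qturn AZ a ((x, y, z), i) =
     (if z \<noteq> a then ((x, y, z), i) else ((cneg y, x, a), swap_xy i))"

inductive_set cluster :: "'l cell \<Rightarrow> 'l cell set" for c :: "'l cell" where
  base: "c \<in> cluster c"
| fwd: "d \<in> cluster c \<Longrightarrow> qturn i a d \<in> cluster c"
| bwd: "d \<in> cluster c \<Longrightarrow> inv (qturn i a) d \<in> cluster c"

datatype color = Red | White | Green | Orange | Yellow | Blue

datatype cval = Col color | NaC

type_synonym 'l config = "'l cell \<Rightarrow> cval"

definition legal :: "'l config \<Rightarrow> bool" where
  "legal f \<longleftrightarrow> (\<forall>c. is_cell c \<longrightarrow> f c \<noteq> NaC)"

definition f_solved :: "'l config" where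
  "f_solved c = (let p = fst c; i = snd c in
     if coord_of i p = PInf then
       (case i of AX \<Rightarrow> Col Red | AY \<Rightarrow> Col Blue | AZ \<Rightarrow> Col White)
     else if coord_of i p = NInf then
       (case i of AX \<Rightarrow> Col Orange | AY \<Rightarrow> Col Green | AZ \<Rightarrow> Col Yellow)
     else NaC)"

type_synonym 'l btwist = "axis \<times> 'l coord \<times> nat"

definition basic_twist :: "'l btwist \<Rightarrow> bool" where
  "basic_twist s \<longleftrightarrow> (case s of (i, a, k) \<Rightarrow> k \<in> {1, 2, 3})"

definition twist_perm :: "'l btwist \<Rightarrow> 'l cell \<Rightarrow> 'l cell" where
  "twist_perm s = (case s of (i, a, k) \<Rightarrow> qturn i a ^^ k)"

definition act :: "'l btwist \<Rightarrow> 'l config \<Rightarrow> 'l config" where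
  "act s f = (\<lambda>c. f (inv (twist_perm s) c))"

definition lim_config :: "('o::wellorder \<Rightarrow> 'l config) \<Rightarrow> 'o \<Rightarrow> 'l config" where
  "lim_config F lam c =
     (if \<exists>v e0. e0 < lam \<and> (\<forall>e. e0 \<le> e \<and> e < lam \<longrightarrow> F e c = v)
      then (THE v. \<exists>e0. e0 < lam \<and> (\<forall>e. e0 \<le> e \<and> e < lam \<longrightarrow> F e c = v))
      else NaC)"

text \<open>A basic sequence of ordinal length theta is modelled by indices e < theta
  in a well-ordered type; F is the run of configurations f_e, e <= theta,
  obtained by applying the sequence sigma to f0.\<close>
definition is_run ::
  "'l config \<Rightarrow> ('o::wellorder \<Rightarrow> 'l btwist) \<Rightarrow> 'o \<Rightarrow> ('o \<Rightarrow> 'l config) \<Rightarrow> bool" where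
  "is_run f0 sigma theta F \<longleftrightarrow>
     (\<forall>e. e < theta \<longrightarrow> basic_twist (sigma e)) \<and>
     (\<forall>x. x \<le> theta \<longrightarrow>
        ((\<not> (\<exists>e. e < x)) \<longrightarrow> F x = f0) \<and>
        (\<forall>e. e < x \<and> \<not> (\<exists>m. e < m \<and> m < x) \<longrightarrow> F x = act (sigma e) (F e)) \<and>
        ((\<exists>e. e < x) \<and> (\<forall>e. e < x \<longrightarrow> (\<exists>m. e < m \<and> m < x)) \<longrightarrow> F x = lim_config F x))"

end

theory Submission
  imports Defs
begin

lemma cneg_cneg[simp]: "cneg (cneg a) = a" by (cases a) auto
lemma is_inf_cneg[simp]: "is_inf (cneg a) = is_inf a" by (cases a) (auto simp: is_inf_def)
lemma cneg_inj[simp]: "(cneg a = cneg b) = (a = b)" by (metis cneg_cneg)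
lemma swap_simps[simp]: "swap_yz (swap_yz i) = i" "swap_xz (swap_xz i) = i" "swap_xy (swap_xy i) = i"
  by (cases i; simp)+

lemma q4: "qturn i a (qturn i a (qturn i a (qturn i a c))) = c"
  by (cases c; cases i) auto

lemma univ_axis: "(UNIV :: axis set) = {AX, AY, AZ}"
  using axis.exhaust by auto

lemma num_inf_eq: "num_inf (x,y,z) = (if is_inf x then 1 else 0) + (if is_inf y then 1 else 0) + (if is_inf z then (1::nat) else 0)"
proof -
  have "{i. is_inf (coord_of i (x,y,z))} = (if is_inf x then {AX} else {}) \<union> (if is_inf y then {AY} else {}) \<union> (if is_inf z then {AZ} else {})"
    by (rule set_eqI, case_tac xa, auto)
  then show ?thesis unfolding num_inf_def by auto
qed

definition pos :: "'l coord \<Rightarrow> bool" where "pos a = (a = PInf)"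

fun phi :: "'l cell \<Rightarrow> 'l coord" where
 "phi ((x,y,z), m) =
 (if \<not>is_inf x then (if (m = AY) = (pos y = pos z) then x else cneg x)
  else if \<not> is_inf y then (if (m = AZ) = (pos z = pos x) then y else cneg y)
  else (if (m = AX) = (pos x = pos y) then z else cneg z))"

lemma pos_cneg: "is_inf a \<Longrightarrow> pos (cneg a) = (\<not> pos a)"
  by (cases a) (auto simp: is_inf_def pos_def)


lemma cell_cases: obtains x y z m where "c = ((x,y,z),m)"
  by (metis prod_cases3 surj_pair)
lemma edge_q0: "edge_cell (qturn i a ((x,y,z),m)) = edge_cell ((x,y,z),m)"
  by (cases i; cases m) (auto simp: edge_cell_def is_cell_def num_inf_eq)
lemma edge_q: "edge_cell (qturn i a c) = edge_cell c"
  by (cases c rule: cell_cases) (simp only: edge_q0)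
lemma corner_q0: "corner_cell (qturn i a ((x,y,z),m)) = corner_cell ((x,y,z),m)"
  by (cases i; cases m) (auto simp: corner_cell_def is_cell_def num_inf_eq)
lemma corner_q: "corner_cell (qturn i a c) = corner_cell c"
  by (cases c rule: cell_cases) (simp only: corner_q0)
lemma cell_q0: "is_cell (qturn i a ((x,y,z),m)) = is_cell ((x,y,z),m)"
  by (cases i; cases m) (auto simp: is_cell_def)
lemma cell_q: "is_cell (qturn i a c) = is_cell c"
  by (cases c rule: cell_cases) (simp only: cell_q0)
lemma fst_q: "fst c = fst d \<Longrightarrow> fst (qturn i a c) = fst (qturn i a d)"
  by (cases c; cases d; cases i) auto
lemma phiX: "edge_cell ((x,y,z),m) \<Longrightarrow> phi ((x, cneg z, y), swap_yz m) = phi ((x,y,z),m)"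
  by (cases "is_inf x"; cases "is_inf y"; cases "is_inf z"; cases m)
     (simp_all add: edge_cell_def is_cell_def num_inf_eq pos_cneg, (cases "pos x"; cases "pos y"; cases "pos z"; simp add: pos_cneg)?)
lemma phiY: "edge_cell ((x,y,z),m) \<Longrightarrow> phi ((z, y, cneg x), swap_xz m) = phi ((x,y,z),m)"
  by (cases "is_inf x"; cases "is_inf y"; cases "is_inf z"; cases m)
     (simp_all add: edge_cell_def is_cell_def num_inf_eq pos_cneg, (cases "pos x"; cases "pos y"; cases "pos z"; simp add: pos_cneg)?)
lemma phiZ: "edge_cell ((x,y,z),m) \<Longrightarrow> phi ((cneg y, x, z), swap_xy m) = phi ((x,y,z),m)"
  by (cases "is_inf x"; cases "is_inf y"; cases "is_inf z"; cases m)
     (simp_all add: edge_cell_def is_cell_def num_inf_eq pos_cneg, (cases "pos x"; cases "pos y"; cases "pos z"; simp add: pos_cneg)?)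
lemma phi_q0: assumes e: "edge_cell ((x,y,z),m)" shows "phi (qturn i a ((x,y,z),m)) = phi ((x,y,z),m)"
proof (cases i)
  case AX then show ?thesis
    using phiX[OF e] by (cases "x = a") (simp_all del: phi.simps)
next
  case AY then show ?thesis
    using phiY[OF e] by (cases "y = a") (simp_all del: phi.simps)
next
  case AZ then show ?thesis
    using phiZ[OF e] by (cases "z = a") (simp_all del: phi.simps)
qed

lemma phi_q: "edge_cell c \<Longrightarrow> phi (qturn i a c) = phi c"
  by (cases c rule: cell_cases) (simp only: phi_q0)

lemma q4f: "qturn i a ^^ 4 = id"
  by (rule ext) (simp add: numeral_eq_Suc q4)

lemma qpow_mult4: "qturn i a ^^ (4*n) = id"
proof (induction n)
  case 0 then show ?case by simp
next
  case (Suc n)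
  have "qturn i a ^^ (4*Suc n) = qturn i a ^^ (4 + 4*n)" by simp
  also have "\<dots> = (qturn i a ^^ 4) \<circ> (qturn i a ^^ (4*n))"
    by (simp only: funpow_add)
  also have "\<dots> = id" by (simp only: Suc.IH q4f comp_id)
  finally show ?case .
qed

lemma qpow_inv_aux: "(qturn i a ^^ m) ((qturn i a ^^ n) x) = x" if "m + n = 4*k"
proof -
  have "(qturn i a ^^ m) ((qturn i a ^^ n) x) = (qturn i a ^^ (m+n)) x"
    by (simp only: funpow_add comp_apply)
  also have "\<dots> = x" by (simp only: that qpow_mult4 id_apply)
  finally show ?thesis .
qed

lemma inv_qpow: "inv (qturn i a ^^ k) = qturn i a ^^ (3*k)"
  by (rule inv_equality) (rule qpow_inv_aux[where k=k]; simp)+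

lemma inv_q: "inv (qturn i a) = qturn i a ^^ 3"
  using inv_qpow[where i=i and a=a and k=1] by simp

lemma q_inj: "inj (qturn i a)"
  by (metis injI q4)

definition good :: "('l cell \<Rightarrow> 'l cell) \<Rightarrow> bool" where
  "good p \<longleftrightarrow> inj p \<and> (\<forall>c0 c. c \<in> cluster c0 \<longrightarrow> p c \<in> cluster c0)
     \<and> (\<forall>c. edge_cell (p c) = edge_cell c) \<and> (\<forall>c. corner_cell (p c) = corner_cell c)
     \<and> (\<forall>c. is_cell (p c) = is_cell c) \<and> (\<forall>c d. fst c = fst d \<longrightarrow> fst (p c) = fst (p d))"

lemma goodI: "inj p \<Longrightarrow> (\<And>c0 c. c \<in> cluster c0 \<Longrightarrow> p c \<in> cluster c0)
   \<Longrightarrow> (\<And>c. edge_cell (p c) = edge_cell c) \<Longrightarrow> (\<And>c. corner_cell (p c) = corner_cell c)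
   \<Longrightarrow> (\<And>c. is_cell (p c) = is_cell c) \<Longrightarrow> (\<And>c d. fst c = fst d \<Longrightarrow> fst (p c) = fst (p d)) \<Longrightarrow> good p"
  unfolding good_def by blast

lemma goodD: assumes "good p" shows "inj p" "\<And>c0 c. c \<in> cluster c0 \<Longrightarrow> p c \<in> cluster c0"
   "\<And>c. edge_cell (p c) = edge_cell c" "\<And>c. corner_cell (p c) = corner_cell c"
   "\<And>c. is_cell (p c) = is_cell c" "\<And>c d. fst c = fst d \<Longrightarrow> fst (p c) = fst (p d)"
  using assms unfolding good_def by blast+

lemma good_q: "good (qturn i a)"
  by (rule goodI[OF q_inj cluster.fwd edge_q corner_q cell_q fst_q])

lemma good_id: "good id"
  by (rule goodI) (simp_all only: inj_on_id id_apply)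

lemma good_comp: fixes p r :: "'l cell \<Rightarrow> 'l cell" assumes "good p" "good r" shows "good (p \<circ> r)"
proof (rule goodI)
  show "inj (p \<circ> r)" using goodD(1)[OF assms(1)] goodD(1)[OF assms(2)] by (rule inj_compose)
next
  fix c0 c :: "'l cell" assume "c \<in> cluster c0"
  then show "(p \<circ> r) c \<in> cluster c0" unfolding comp_apply by (intro goodD(2)[OF assms(1)] goodD(2)[OF assms(2)])
next
  fix c :: "'l cell" show "edge_cell ((p \<circ> r) c) = edge_cell c" unfolding comp_apply goodD(3)[OF assms(1)] goodD(3)[OF assms(2)] ..
next
  fix c :: "'l cell" show "corner_cell ((p \<circ> r) c) = corner_cell c" unfolding comp_apply goodD(4)[OF assms(1)] goodD(4)[OF assms(2)] ..
next
  fix c :: "'l cell" show "is_cell ((p \<circ> r) c) = is_cell c" unfolding comp_apply goodD(5)[OF assms(1)] goodD(5)[OF assms(2)] ..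
next
  fix c d :: "'l cell" assume "fst c = fst d"
  then show "fst ((p \<circ> r) c) = fst ((p \<circ> r) d)" unfolding comp_apply by (intro goodD(6)[OF assms(1)] goodD(6)[OF assms(2)])
qed

lemma good_pow: "good (qturn i a ^^ n)"
proof (induction n)
  case 0 then show ?case using good_id by (simp only: funpow_0 id_def)
next
  case (Suc n) then show ?case using good_comp[OF good_q Suc] by (simp only: funpow.simps(2))
qed

lemma good_coupled: "good p \<Longrightarrow> coupled c d \<Longrightarrow> coupled (p c) (p d)"
  unfolding coupled_def by (metis goodD(1,5,6) injD)

lemma good_act: "good (inv (twist_perm s))"
  by (cases s) (simp add: twist_perm_def inv_qpow good_pow)

lemma cluster_phi: "c \<in> cluster c0 \<Longrightarrow> edge_cell c0 \<Longrightarrow> edge_cell c \<and> phi c = phi c0"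
proof (induction rule: cluster.induct)
  case base then show ?case by simp
next
  case (fwd d i a) then show ?case by (simp add: edge_q phi_q)
next
  case (bwd d i a) then show ?case by (simp add: inv_q numeral_eq_Suc edge_q phi_q)
qed

definition cP :: "axis \<Rightarrow> color" where "cP i = (case i of AX \<Rightarrow> Red | AY \<Rightarrow> Blue | AZ \<Rightarrow> White)"
definition cN :: "axis \<Rightarrow> color" where "cN i = (case i of AX \<Rightarrow> Orange | AY \<Rightarrow> Green | AZ \<Rightarrow> Yellow)"

lemma f_solved_eq: "f_solved (p,i) = (if coord_of i p = PInf then Col (cP i) else if coord_of i p = NInf then Col (cN i) else NaC)"
  by (cases i) (simp_all add: f_solved_def Let_def cP_def cN_def)

lemma solved_col: "f_solved (p,i) = Col g \<Longrightarrow> f_solved (q,j) = Col g \<Longrightarrow> i = j \<and> coord_of i p = coord_of i q"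
  unfolding f_solved_eq
  by (cases i; cases j) (simp_all add: cP_def cN_def split: if_splits)

lemma ec_z: "is_inf x \<Longrightarrow> is_inf y \<Longrightarrow> num_inf (x,y,z) = 2 \<Longrightarrow> num_inf (x,y,z2) = 2 \<Longrightarrow>
   phi ((x,y,z),m) = phi ((x,y,z2),m) \<Longrightarrow> z = z2"
  by (auto simp add: num_inf_eq split: if_splits)
lemma ec_y: "is_inf x \<Longrightarrow> is_inf z \<Longrightarrow> num_inf (x,y,z) = 2 \<Longrightarrow> num_inf (x,y2,z) = 2 \<Longrightarrow>
   phi ((x,y,z),m) = phi ((x,y2,z),m) \<Longrightarrow> y = y2"
  by (auto simp add: num_inf_eq split: if_splits)
lemma ec_x: "is_inf y \<Longrightarrow> is_inf z \<Longrightarrow> num_inf (x,y,z) = 2 \<Longrightarrow> num_inf (x2,y,z) = 2 \<Longrightarrow>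
   phi ((x,y,z),m) = phi ((x2,y,z),m) \<Longrightarrow> x = x2"
  by (auto simp add: num_inf_eq split: if_splits)

lemma edge_core:
  assumes e1: "edge_cell ((x,y,z),m)" and e2: "edge_cell ((x2,y2,z2),m)" and mm: "m \<noteq> m'"
    and inf': "is_inf (coord_of m' (x,y,z))" and c1: "coord_of m (x,y,z) = coord_of m (x2,y2,z2)"
    and c2: "coord_of m' (x,y,z) = coord_of m' (x2,y2,z2)" and ph: "phi ((x,y,z),m) = phi ((x2,y2,z2),m)"
  shows "(x,y,z) = (x2,y2,z2)"
proof -
  have n1: "num_inf (x,y,z) = 2" and i1: "is_inf (coord_of m (x,y,z))"
    using e1 unfolding edge_cell_def is_cell_def by auto
  have n2: "num_inf (x2,y2,z2) = 2" using e2 unfolding edge_cell_def by auto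
  show ?thesis
    using mm inf' c1 c2 i1
    by (cases m; cases m'; simp only: coord_of.simps axis.distinct simp_thms prod.inject)
       (metis ec_x ec_y ec_z n1 n2 ph)+
qed

lemma corner_core: "m1 \<noteq> m2 \<Longrightarrow> m1 \<noteq> m3 \<Longrightarrow> m2 \<noteq> m3 \<Longrightarrow>
  coord_of m1 (x,y,z) = coord_of m1 (x2,y2,z2) \<Longrightarrow>
  coord_of m2 (x,y,z) = coord_of m2 (x2,y2,z2) \<Longrightarrow>
  coord_of m3 (x,y,z) = coord_of m3 (x2,y2,z2) \<Longrightarrow> (x,y,z) = (x2,y2,z2)"
  by (cases m1; cases m2; cases m3; simp only: coord_of.simps axis.distinct simp_thms prod.inject; blast)

definition EdgeInv :: "'l config \<Rightarrow> bool" where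
  "EdgeInv f \<longleftrightarrow> (\<forall>(g1::color) g2 c0 c1 c1' c2 c2'. edge_cell c0 \<and> c1 \<in> cluster c0 \<and> c2 \<in> cluster c0 \<and>
     edge_cell c1 \<and> edge_cell c1' \<and> coupled c1 c1' \<and> f c1 = Col g1 \<and> f c1' = Col g2 \<and>
     edge_cell c2 \<and> edge_cell c2' \<and> coupled c2 c2' \<and> f c2 = Col g1 \<and> f c2' = Col g2
     \<longrightarrow> c1 = c2 \<and> c1' = c2')"

definition CornerInv :: "'l config \<Rightarrow> bool" where
  "CornerInv f \<longleftrightarrow> (\<forall>(g1::color) g2 g3.
            (\<forall>c1 c1' c1'' c2 c2' c2''.
               corner_cell c1 \<and> corner_cell c1' \<and> corner_cell c1'' \<and>
               coupled c1 c1' \<and> coupled c1 c1'' \<and> coupled c1' c1'' \<and>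
               f c1 = Col g1 \<and> f c1' = Col g2 \<and> f c1'' = Col g3 \<and>
               corner_cell c2 \<and> corner_cell c2' \<and> corner_cell c2'' \<and>
               coupled c2 c2' \<and> coupled c2 c2'' \<and> coupled c2' c2'' \<and>
               f c2 = Col g1 \<and> f c2' = Col g2 \<and> f c2'' = Col g3
               \<longrightarrow> c1 = c2 \<and> c1' = c2' \<and> c1'' = c2''))"

lemma EdgeInv_good: assumes "EdgeInv f" "good p" shows "EdgeInv (\<lambda>c. f (p c))"
  unfolding EdgeInv_def
proof (intro allI impI)
  fix g1 g2 c0 c1 c1' c2 c2'
  assume h: "edge_cell c0 \<and> c1 \<in> cluster c0 \<and> c2 \<in> cluster c0 \<and>
     edge_cell c1 \<and> edge_cell c1' \<and> coupled c1 c1' \<and> f (p c1) = Col g1 \<and> f (p c1') = Col g2 \<and>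
     edge_cell c2 \<and> edge_cell c2' \<and> coupled c2 c2' \<and> f (p c2) = Col g1 \<and> f (p c2') = Col g2"
  have "p c1 = p c2 \<and> p c1' = p c2'"
    using assms(1)[unfolded EdgeInv_def, rule_format, of c0 "p c1" "p c2" "p c1'" g1 g2 "p c2'"]
          h goodD[OF assms(2)] good_coupled[OF assms(2)] by blast
  then show "c1 = c2 \<and> c1' = c2'" using goodD(1)[OF assms(2)] by (meson injD)
qed

lemma CornerInv_good: assumes "CornerInv f" "good p" shows "CornerInv (\<lambda>c. f (p c))"
  unfolding CornerInv_def
proof (intro allI impI)
  fix g1 g2 g3 c1 c1' c1'' c2 c2' c2''
  assume h: "corner_cell c1 \<and> corner_cell c1' \<and> corner_cell c1'' \<and>
               coupled c1 c1' \<and> coupled c1 c1'' \<and> coupled c1' c1'' \<and>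
               f (p c1) = Col g1 \<and> f (p c1') = Col g2 \<and> f (p c1'') = Col g3 \<and>
               corner_cell c2 \<and> corner_cell c2' \<and> corner_cell c2'' \<and>
               coupled c2 c2' \<and> coupled c2 c2'' \<and> coupled c2' c2'' \<and>
               f (p c2) = Col g1 \<and> f (p c2') = Col g2 \<and> f (p c2'') = Col g3"
  have "p c1 = p c2 \<and> p c1' = p c2' \<and> p c1'' = p c2''"
    using assms(1)[unfolded CornerInv_def, rule_format, of "p c1" "p c1'" "p c1''" g1 g2 g3 "p c2" "p c2'" "p c2''"]
          h goodD[OF assms(2)] good_coupled[OF assms(2)] by blast
  then show "c1 = c2 \<and> c1' = c2' \<and> c1'' = c2''" using goodD(1)[OF assms(2)] by (meson injD)
qed

lemma coupled_split: "coupled (p,i) (q,j) \<Longrightarrow> p = q \<and> i \<noteq> j \<and> is_inf (coord_of i p) \<and> is_inf (coord_of j p)"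
  unfolding coupled_def is_cell_def by auto

lemma EdgeInv_solved: "EdgeInv (f_solved :: 'l config)"
  unfolding EdgeInv_def
proof (intro allI impI)
  fix g1 g2 and c0 c1 c1' c2 c2' :: "'l cell"
  assume h: "edge_cell c0 \<and> c1 \<in> cluster c0 \<and> c2 \<in> cluster c0 \<and>
     edge_cell c1 \<and> edge_cell c1' \<and> coupled c1 c1' \<and> f_solved c1 = Col g1 \<and> f_solved c1' = Col g2 \<and>
     edge_cell c2 \<and> edge_cell c2' \<and> coupled c2 c2' \<and> f_solved c2 = Col g1 \<and> f_solved c2' = Col g2"
  obtain x y z m where c1: "c1 = ((x,y,z),m)" by (rule cell_cases)
  obtain x2 y2 z2 m2 where c2: "c2 = ((x2,y2,z2),m2)" by (rule cell_cases)
  obtain p' m' where c1': "c1' = (p',m')" by (rule prod.exhaust)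
  obtain q' m2' where c2': "c2' = (q',m2')" by (rule prod.exhaust)
  have ph1: "phi c1 = phi c0" using cluster_phi[of c1 c0] h by blast
  have ph2: "phi c2 = phi c0" using cluster_phi[of c2 c0] h by blast
  note H = h[unfolded c1 c1' c2 c2']
  have hc1: "coupled ((x,y,z),m) (p',m')" using H by blast
  have hc2: "coupled ((x2,y2,z2),m2) (q',m2')" using H by blast
  have cp1: "p' = (x,y,z) \<and> m \<noteq> m' \<and> is_inf (coord_of m' (x,y,z))"
    using coupled_split[OF hc1] by blast
  have cp2: "q' = (x2,y2,z2) \<and> m2 \<noteq> m2'"
    using coupled_split[OF hc2] by blast
  have f1: "f_solved ((x,y,z),m) = Col g1" "f_solved ((x2,y2,z2),m2) = Col g1"
     "f_solved (p',m') = Col g2" "f_solved (q',m2') = Col g2" using H by blast+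
  have s1: "m = m2 \<and> coord_of m (x,y,z) = coord_of m (x2,y2,z2)"
    using solved_col[OF f1(1) f1(2)] .
  have s2': "m' = m2' \<and> coord_of m' p' = coord_of m' q'"
    using solved_col[OF f1(3) f1(4)] .
  have s2: "m' = m2' \<and> coord_of m' (x,y,z) = coord_of m' (x2,y2,z2)"
    using s2' cp1 cp2 by auto
  have e1: "edge_cell ((x,y,z),m)" using H by blast
  have e2': "edge_cell ((x2,y2,z2),m2)" using H by blast
  have e2: "edge_cell ((x2,y2,z2),m)" using e2' s1 by blast
  have mm2: "m = m2" using s1 by blast
  have ph1': "phi ((x,y,z),m) = phi c0" using ph1 unfolding c1 .
  have ph2': "phi ((x2,y2,z2),m) = phi c0" using ph2 unfolding c2 mm2[symmetric] .
  have ph': "phi ((x,y,z),m) = phi ((x2,y2,z2),m)" using ph1' ph2' by (rule trans[OF _ sym])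
  have mm: "m \<noteq> m'" and inf': "is_inf (coord_of m' (x,y,z))" using cp1 by blast+
  have xyz: "(x,y,z) = (x2,y2,z2)"
    using edge_core[OF e1 e2 mm inf' conjunct2[OF s1] conjunct2[OF s2] ph'] .
  have "c1 = c2" using c1 c2 s1 xyz by simp
  moreover have "c1' = c2'" using c1' c2' s2 cp1 cp2 xyz by simp
  ultimately show "c1 = c2 \<and> c1' = c2'" ..
qed

lemma CornerInv_solved: "CornerInv (f_solved :: 'l config)"
  unfolding CornerInv_def
proof (intro allI impI)
  fix g1 g2 g3 and c1 c1' c1'' c2 c2' c2'' :: "'l cell"
  assume h: "corner_cell c1 \<and> corner_cell c1' \<and> corner_cell c1'' \<and>
               coupled c1 c1' \<and> coupled c1 c1'' \<and> coupled c1' c1'' \<and>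
               f_solved c1 = Col g1 \<and> f_solved c1' = Col g2 \<and> f_solved c1'' = Col g3 \<and>
               corner_cell c2 \<and> corner_cell c2' \<and> corner_cell c2'' \<and>
               coupled c2 c2' \<and> coupled c2 c2'' \<and> coupled c2' c2'' \<and>
               f_solved c2 = Col g1 \<and> f_solved c2' = Col g2 \<and> f_solved c2'' = Col g3"
  obtain p m where c1: "c1 = (p,m)" by (rule prod.exhaust)
  obtain q m2 where c2: "c2 = (q,m2)" by (rule prod.exhaust)
  obtain p' m' where c1': "c1' = (p',m')" by (rule prod.exhaust)
  obtain q' m2' where c2': "c2' = (q',m2')" by (rule prod.exhaust)
  obtain p'' m'' where c1'': "c1'' = (p'',m'')" by (rule prod.exhaust)
  obtain q'' m2'' where c2'': "c2'' = (q'',m2'')" by (rule prod.exhaust)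
  note H = h[unfolded c1 c1' c2 c2' c1'' c2'']
  have hc: "coupled (p,m) (p',m')" "coupled (p,m) (p'',m'')" "coupled (p',m') (p'',m'')"
    "coupled (q,m2) (q',m2')" "coupled (q,m2) (q'',m2'')" using H by blast+
  have cp1: "p' = p \<and> p'' = p \<and> m \<noteq> m' \<and> m \<noteq> m'' \<and> m' \<noteq> m''"
    using coupled_split[OF hc(1)] coupled_split[OF hc(2)] coupled_split[OF hc(3)] by auto
  have cp2: "q' = q \<and> q'' = q"
    using coupled_split[OF hc(4)] coupled_split[OF hc(5)] by auto
  have f1: "f_solved (p,m) = Col g1" "f_solved (q,m2) = Col g1"
     "f_solved (p',m') = Col g2" "f_solved (q',m2') = Col g2"
     "f_solved (p'',m'') = Col g3" "f_solved (q'',m2'') = Col g3" using H by blast+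
  have s1: "m = m2 \<and> coord_of m p = coord_of m q"
    using solved_col[OF f1(1) f1(2)] .
  have s2: "m' = m2' \<and> coord_of m' p = coord_of m' q"
    using solved_col[OF f1(3) f1(4)] cp1 cp2 by auto
  have s3: "m'' = m2'' \<and> coord_of m'' p = coord_of m'' q"
    using solved_col[OF f1(5) f1(6)] cp1 cp2 by auto
  obtain x y z where px: "p = (x,y,z)" by (rule prod_cases3)
  obtain x2 y2 z2 where qx: "q = (x2,y2,z2)" by (rule prod_cases3)
  have k1: "coord_of m (x,y,z) = coord_of m (x2,y2,z2)" using s1 px qx by blast
  have k2: "coord_of m' (x,y,z) = coord_of m' (x2,y2,z2)" using s2 px qx by blast
  have k3: "coord_of m'' (x,y,z) = coord_of m'' (x2,y2,z2)" using s3 px qx by blast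
  have d: "m \<noteq> m'" "m \<noteq> m''" "m' \<noteq> m''" using cp1 by blast+
  have "(x,y,z) = (x2,y2,z2)"
    by (rule corner_core[OF d k1 k2 k3])
  then have pq: "p = q" using px qx by simp
  show "c1 = c2 \<and> c1' = c2' \<and> c1'' = c2''" using c1 c2 c1' c2' c1'' c2'' s1 s2 s3 cp1 cp2 pq by simp
qed

lemma lim_single:
  fixes F :: "'o::wellorder \<Rightarrow> 'l config"
  assumes "lim_config F x c \<noteq> NaC"
  shows "\<exists>e0<x. \<forall>e. e0 \<le> e \<and> e < x \<longrightarrow> F e c = lim_config F x c"
proof -
  have ex: "\<exists>v e0. e0 < x \<and> (\<forall>e. e0 \<le> e \<and> e < x \<longrightarrow> F e c = v)"
    using assms unfolding lim_config_def by (auto split: if_splits)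
  then obtain v e0 where v: "e0 < x" "\<forall>e. e0 \<le> e \<and> e < x \<longrightarrow> F e c = v" by blast
  have "(THE v. \<exists>e0. e0 < x \<and> (\<forall>e. e0 \<le> e \<and> e < x \<longrightarrow> F e c = v)) = v"
  proof (rule the_equality)
    show "\<exists>e0. e0 < x \<and> (\<forall>e. e0 \<le> e \<and> e < x \<longrightarrow> F e c = v)" using v by blast
  next
    fix w assume "\<exists>e0. e0 < x \<and> (\<forall>e. e0 \<le> e \<and> e < x \<longrightarrow> F e c = w)"
    then obtain e1 where e1: "e1 < x" "\<forall>e. e1 \<le> e \<and> e < x \<longrightarrow> F e c = w" by blast
    have m: "max e0 e1 < x" "e0 \<le> max e0 e1" "e1 \<le> max e0 e1" using v(1) e1(1) by (simp_all add: max_less_iff_conj)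
    have "F (max e0 e1) c = w" using e1(2) m by blast
    moreover have "F (max e0 e1) c = v" using v(2) m by blast
    ultimately show "w = v" by simp
  qed
  moreover have "lim_config F x c = (THE v. \<exists>e0. e0 < x \<and> (\<forall>e. e0 \<le> e \<and> e < x \<longrightarrow> F e c = v))"
    unfolding lim_config_def using ex by (rule if_P)
  ultimately have lv: "lim_config F x c = v" by (rule trans[rotated])
  show ?thesis
  proof (rule exI[of _ e0], rule conjI)
    show "e0 < x" by (rule v(1))
    show "\<forall>e. e0 \<le> e \<and> e < x \<longrightarrow> F e c = lim_config F x c" unfolding lv by (rule v(2))
  qed
qed

lemma lim_list:
  fixes F :: "'o::wellorder \<Rightarrow> 'l config"
  assumes "\<forall>c\<in>set cs. lim_config F x c \<noteq> NaC" "\<exists>e. e < x"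
  shows "\<exists>e0<x. \<forall>e. e0 \<le> e \<and> e < x \<longrightarrow> (\<forall>c\<in>set cs. F e c = lim_config F x c)"
  using assms(1)
proof (induction cs)
  case Nil then show ?case using assms(2) by auto
next
  case (Cons c cs)
  have p1: "\<forall>c\<in>set cs. lim_config F x c \<noteq> NaC" using Cons.prems by simp
  have p2: "lim_config F x c \<noteq> NaC" using Cons.prems by simp
  obtain e1 where e1: "e1 < x" "\<forall>e. e1 \<le> e \<and> e < x \<longrightarrow> (\<forall>c\<in>set cs. F e c = lim_config F x c)"
    using Cons.IH[OF p1] by blast
  obtain e2 where e2: "e2 < x" "\<forall>e. e2 \<le> e \<and> e < x \<longrightarrow> F e c = lim_config F x c"
    using lim_single[OF p2] by blast
  show ?case
  proof (rule exI[of _ "max e1 e2"], intro conjI allI impI)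
    show "max e1 e2 < x" using e1(1) e2(1) by simp
    fix e assume "max e1 e2 \<le> e \<and> e < x"
    then have "e1 \<le> e \<and> e < x" "e2 \<le> e \<and> e < x" by simp_all
    then show "\<forall>c'\<in>set (c # cs). F e c' = lim_config F x c'" using e1(2) e2(2) by simp
  qed
qed

lemma Edge_lim:
  fixes F :: "'o::wellorder \<Rightarrow> 'l config"
  assumes "\<forall>e<x. EdgeInv (F e)" "\<exists>e. e < x"
  shows "EdgeInv (lim_config F x)"
  unfolding EdgeInv_def
proof (intro allI impI)
  fix g1 g2 and c0 c1 c1' c2 c2' :: "'l cell"
  assume h: "edge_cell c0 \<and> c1 \<in> cluster c0 \<and> c2 \<in> cluster c0 \<and>
     edge_cell c1 \<and> edge_cell c1' \<and> coupled c1 c1' \<and> lim_config F x c1 = Col g1 \<and> lim_config F x c1' = Col g2 \<and>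
     edge_cell c2 \<and> edge_cell c2' \<and> coupled c2 c2' \<and> lim_config F x c2 = Col g1 \<and> lim_config F x c2' = Col g2"
  have nn: "\<forall>c\<in>set [c1,c1',c2,c2']. lim_config F x c \<noteq> NaC" using h by auto
  obtain e0 where e0: "e0 < x" "\<forall>e. e0 \<le> e \<and> e < x \<longrightarrow> (\<forall>c\<in>set [c1,c1',c2,c2']. F e c = lim_config F x c)"
    using lim_list[OF nn assms(2)] by blast
  have v: "\<forall>c\<in>set [c1,c1',c2,c2']. F e0 c = lim_config F x c" using e0 order_refl by blast
  have v2: "F e0 c1 = Col g1" "F e0 c1' = Col g2" "F e0 c2 = Col g1" "F e0 c2' = Col g2"
    using v h by simp_all
  have EI: "EdgeInv (F e0)" using assms(1) e0 by blast
  show "c1 = c2 \<and> c1' = c2'"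
    using EI[unfolded EdgeInv_def, rule_format, of c0 c1 c2 c1' g1 g2 c2'] v2 h by blast
qed

lemma Corner_lim:
  fixes F :: "'o::wellorder \<Rightarrow> 'l config"
  assumes "\<forall>e<x. CornerInv (F e)" "\<exists>e. e < x"
  shows "CornerInv (lim_config F x)"
  unfolding CornerInv_def
proof (intro allI impI)
  fix g1 g2 g3 and c1 c1' c1'' c2 c2' c2'' :: "'l cell"
  assume h: "corner_cell c1 \<and> corner_cell c1' \<and> corner_cell c1'' \<and>
               coupled c1 c1' \<and> coupled c1 c1'' \<and> coupled c1' c1'' \<and>
               lim_config F x c1 = Col g1 \<and> lim_config F x c1' = Col g2 \<and> lim_config F x c1'' = Col g3 \<and>
               corner_cell c2 \<and> corner_cell c2' \<and> corner_cell c2'' \<and>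
               coupled c2 c2' \<and> coupled c2 c2'' \<and> coupled c2' c2'' \<and>
               lim_config F x c2 = Col g1 \<and> lim_config F x c2' = Col g2 \<and> lim_config F x c2'' = Col g3"
  have nn: "\<forall>c\<in>set [c1,c1',c1'',c2,c2',c2'']. lim_config F x c \<noteq> NaC" using h by auto
  obtain e0 where e0: "e0 < x" "\<forall>e. e0 \<le> e \<and> e < x \<longrightarrow> (\<forall>c\<in>set [c1,c1',c1'',c2,c2',c2'']. F e c = lim_config F x c)"
    using lim_list[OF nn assms(2)] by blast
  have v: "\<forall>c\<in>set [c1,c1',c1'',c2,c2',c2'']. F e0 c = lim_config F x c" using e0 order_refl by blast
  have v2: "F e0 c1 = Col g1" "F e0 c1' = Col g2" "F e0 c1'' = Col g3" "F e0 c2 = Col g1" "F e0 c2' = Col g2" "F e0 c2'' = Col g3"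
    using v h by simp_all
  have CI: "CornerInv (F e0)" using assms(1) e0 by blast
  show "c1 = c2 \<and> c1' = c2' \<and> c1'' = c2''"
    using CI[unfolded CornerInv_def, rule_format, of c1 c1' c1'' g1 g2 g3 c2 c2' c2''] v2 h by blast
qed

lemma run_inv:
  fixes F :: "'o::wellorder \<Rightarrow> 'l config"
  assumes run: "is_run f_solved sigma theta F"
  shows "x \<le> theta \<Longrightarrow> EdgeInv (F x) \<and> CornerInv (F x)"
proof (induction x rule: less_induct)
  case (less x)
  have R: "((\<not> (\<exists>e. e < x)) \<longrightarrow> F x = f_solved) \<and>
        (\<forall>e. e < x \<and> \<not> (\<exists>m. e < m \<and> m < x) \<longrightarrow> F x = act (sigma e) (F e)) \<and>
        ((\<exists>e. e < x) \<and> (\<forall>e. e < x \<longrightarrow> (\<exists>m. e < m \<and> m < x)) \<longrightarrow> F x = lim_config F x)"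
    using run less.prems unfolding is_run_def by blast
  show ?case
  proof (cases "\<exists>e. e < x")
    case False
    then show ?thesis using R EdgeInv_solved CornerInv_solved by simp
  next
    case True
    show ?thesis
    proof (cases "\<exists>e. e < x \<and> \<not> (\<exists>m. e < m \<and> m < x)")
      case True
      then obtain e where e: "e < x" "\<not> (\<exists>m. e < m \<and> m < x)" by blast
      then have Fx: "F x = (\<lambda>c. F e (inv (twist_perm (sigma e)) c))" using R unfolding act_def by blast
      have "EdgeInv (F e) \<and> CornerInv (F e)" using less.IH e less.prems by simp
      then show ?thesis unfolding Fx using EdgeInv_good CornerInv_good good_act by blast
    next
      case False
      then have Fx: "F x = lim_config F x" using R \<open>\<exists>e. e < x\<close> by blast
      have IH: "\<forall>e<x. EdgeInv (F e) \<and> CornerInv (F e)" using less.IH less.prems by simp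
      then show ?thesis unfolding Fx using Edge_lim Corner_lim \<open>\<exists>e. e < x\<close> by blast
    qed
  qed
qed

theorem lemma4p1:
  fixes f :: "'l config"
    and sigma :: "'o::wellorder \<Rightarrow> 'l btwist"
    and theta :: 'o
    and F :: "'o \<Rightarrow> 'l config"
  assumes infL: "infinite (UNIV :: 'l set)"
    and run: "is_run f_solved sigma theta F"
    and termf: "F theta = f"
    and leg: "legal f"
  shows "(\<forall>(g1::color) g2 C c0.
            is_cell c0 \<and> C = cluster c0 \<and> (\<forall>c\<in>C. edge_cell c) \<and> C \<noteq> corner_cluster \<longrightarrow>
            (\<forall>c1 c1' c2 c2'.
               c1 \<in> C \<and> edge_cell c1 \<and> edge_cell c1' \<and> coupled c1 c1' \<and>
               f c1 = Col g1 \<and> f c1' = Col g2 \<and>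
               c2 \<in> C \<and> edge_cell c2 \<and> edge_cell c2' \<and> coupled c2 c2' \<and>
               f c2 = Col g1 \<and> f c2' = Col g2
               \<longrightarrow> c1 = c2 \<and> c1' = c2'))
       \<and> (\<forall>(g1::color) g2 g3.
            (\<forall>c1 c1' c1'' c2 c2' c2''.
               corner_cell c1 \<and> corner_cell c1' \<and> corner_cell c1'' \<and>
               coupled c1 c1' \<and> coupled c1 c1'' \<and> coupled c1' c1'' \<and>
               f c1 = Col g1 \<and> f c1' = Col g2 \<and> f c1'' = Col g3 \<and>
               corner_cell c2 \<and> corner_cell c2' \<and> corner_cell c2'' \<and>
               coupled c2 c2' \<and> coupled c2 c2'' \<and> coupled c2' c2'' \<and>
               f c2 = Col g1 \<and> f c2' = Col g2 \<and> f c2'' = Col g3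
               \<longrightarrow> c1 = c2 \<and> c1' = c2' \<and> c1'' = c2''))"
proof -
  have I: "EdgeInv f \<and> CornerInv f" using run_inv[OF run, of theta] termf by simp
  show ?thesis
  proof (intro conjI)
    show "\<forall>(g1::color) g2 C c0.
            is_cell c0 \<and> C = cluster c0 \<and> (\<forall>c\<in>C. edge_cell c) \<and> C \<noteq> corner_cluster \<longrightarrow>
            (\<forall>c1 c1' c2 c2'.
               c1 \<in> C \<and> edge_cell c1 \<and> edge_cell c1' \<and> coupled c1 c1' \<and>
               f c1 = Col g1 \<and> f c1' = Col g2 \<and>
               c2 \<in> C \<and> edge_cell c2 \<and> edge_cell c2' \<and> coupled c2 c2' \<and>
               f c2 = Col g1 \<and> f c2' = Col g2
               \<longrightarrow> c1 = c2 \<and> c1' = c2')"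
    proof (intro allI impI)
      fix g1 g2 C c0 c1 c1' c2 c2'
      assume A: "is_cell c0 \<and> C = cluster c0 \<and> (\<forall>c\<in>C. edge_cell c) \<and> C \<noteq> corner_cluster"
        and B: "c1 \<in> C \<and> edge_cell c1 \<and> edge_cell c1' \<and> coupled c1 c1' \<and>
               f c1 = Col g1 \<and> f c1' = Col g2 \<and>
               c2 \<in> C \<and> edge_cell c2 \<and> edge_cell c2' \<and> coupled c2 c2' \<and>
               f c2 = Col g1 \<and> f c2' = Col g2"
      have "edge_cell c0" using A cluster.base by blast
      then show "c1 = c2 \<and> c1' = c2'"
        using conjunct1[OF I, unfolded EdgeInv_def, rule_format, of c0 c1 c2 c1' g1 g2 c2'] A B by blast
    qed
    show "\<forall>(g1::color) g2 g3.
            (\<forall>c1 c1' c1'' c2 c2' c2''.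
               corner_cell c1 \<and> corner_cell c1' \<and> corner_cell c1'' \<and>
               coupled c1 c1' \<and> coupled c1 c1'' \<and> coupled c1' c1'' \<and>
               f c1 = Col g1 \<and> f c1' = Col g2 \<and> f c1'' = Col g3 \<and>
               corner_cell c2 \<and> corner_cell c2' \<and> corner_cell c2'' \<and>
               coupled c2 c2' \<and> coupled c2 c2'' \<and> coupled c2' c2'' \<and>
               f c2 = Col g1 \<and> f c2' = Col g2 \<and> f c2'' = Col g3
               \<longrightarrow> c1 = c2 \<and> c1' = c2' \<and> c1'' = c2'')"
      using conjunct2[OF I] unfolding CornerInv_def .
  qed
qed

end
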